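(* For a ring $R$, the following are equivalent: (1) $R$ is uniquely weakly $J$-clean; (2) $R/J(R)$ is semi Boolean and idempotents can be lifted uniquely weakly modulo $J(R)$.
   Context: All rings are associative with identity; $J(R)$ is the Jacobson radical and $Idem(R)$ the set of idempotents. $R$ is uniquely weakly $J$-clean if for every $x\in R$ there exists a unique $e\in Idem(R)$ with $x-e\in J(R)$ or $x+e\in J(R)$. A ring $A$ is semi Boolean if for every $x\in A$, $x^2=x$ or $x^2=-x$. Idempotents can be lifted uniquely weakly modulo an ideal $I$ if for every $x\in R$ with $x^2-x\in I$ there exists a unique $e\in Idem(R)$ with $x-e\in I$ or $x+e\in I$. *)

theory Defs
  imports "HOL-Algebra.Algebra"
begin

definition left_ideal :: "('a, 'b) ring_scheme \<Rightarrow> 'a set \<Rightarrow> bool" where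
  "left_ideal R I \<longleftrightarrow> additive_subgroup I R \<and>
     (\<forall>r\<in>carrier R. \<forall>x\<in>I. r \<otimes>\<^bsub>R\<^esub> x \<in> I)"

definition maximal_left_ideal :: "('a, 'b) ring_scheme \<Rightarrow> 'a set \<Rightarrow> bool" where
  "maximal_left_ideal R I \<longleftrightarrow> left_ideal R I \<and> I \<noteq> carrier R \<and>
     (\<forall>K. left_ideal R K \<and> I \<subseteq> K \<and> K \<noteq> carrier R \<longrightarrow> K = I)"

text \<open>Jacobson radical: intersection of all maximal left ideals (the whole ring if there are none).\<close>
definition jacobson :: "('a, 'b) ring_scheme \<Rightarrow> 'a set" where
  "jacobson R = carrier R \<inter> \<Inter> {I. maximal_left_ideal R I}"

definition Idem_set :: "('a, 'b) ring_scheme \<Rightarrow> 'a set" where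
  "Idem_set R = {e \<in> carrier R. e \<otimes>\<^bsub>R\<^esub> e = e}"

definition uniquely_weakly_J_clean :: "('a, 'b) ring_scheme \<Rightarrow> bool" where
  "uniquely_weakly_J_clean R \<longleftrightarrow> (\<forall>x\<in>carrier R. \<exists>!e. e \<in> Idem_set R \<and>
     (x \<ominus>\<^bsub>R\<^esub> e \<in> jacobson R \<or> x \<oplus>\<^bsub>R\<^esub> e \<in> jacobson R))"

definition semi_boolean :: "('a, 'b) ring_scheme \<Rightarrow> bool" where
  "semi_boolean A \<longleftrightarrow> (\<forall>x\<in>carrier A. x \<otimes>\<^bsub>A\<^esub> x = x \<or> x \<otimes>\<^bsub>A\<^esub> x = \<ominus>\<^bsub>A\<^esub> x)"

definition idem_lift_uniquely_weakly :: "('a, 'b) ring_scheme \<Rightarrow> 'a set \<Rightarrow> bool" where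
  "idem_lift_uniquely_weakly R I \<longleftrightarrow> (\<forall>x\<in>carrier R. x \<otimes>\<^bsub>R\<^esub> x \<ominus>\<^bsub>R\<^esub> x \<in> I \<longrightarrow>
     (\<exists>!e. e \<in> Idem_set R \<and> (x \<ominus>\<^bsub>R\<^esub> e \<in> I \<or> x \<oplus>\<^bsub>R\<^esub> e \<in> I)))"

end

theory Submission
  imports Defs
begin
lemma addsgI:
  fixes R (structure)
  assumes "ring R" "H \<subseteq> carrier R" "\<zero> \<in> H" "\<And>a. a\<in>H \<Longrightarrow> \<ominus>a \<in> H"
   "\<And>a b. a\<in>H \<Longrightarrow> b\<in>H \<Longrightarrow> a\<oplus>b \<in> H"
  shows "additive_subgroup H R"
proof -
  interpret ring R by fact
  show ?thesis
    apply (rule additive_subgroupI, rule add.subgroupI)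
    using assms by (auto simp: a_inv_def[symmetric])
qed

lemma max_li:
  assumes "maximal_left_ideal R M"
  shows "additive_subgroup M R" "\<And>r x. r \<in> carrier R \<Longrightarrow> x \<in> M \<Longrightarrow> r \<otimes>\<^bsub>R\<^esub> x \<in> M"
  using assms unfolding maximal_left_ideal_def left_ideal_def by auto

lemma colon_in:
  fixes R (structure)
  assumes R: "ring R" and M: "maximal_left_ideal R M" and r: "r \<in> carrier R"
    and x: "x \<in> jacobson R"
  shows "x \<otimes>\<^bsub>R\<^esub> r \<in> M"
proof -
  interpret ring R by fact
  have Ms: "additive_subgroup M R" and Ml: "\<And>r x. r \<in> carrier R \<Longrightarrow> x \<in> M \<Longrightarrow> r \<otimes> x \<in> M"
    using max_li[OF M] by auto
  interpret M: additive_subgroup M R by fact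
  have xc: "x \<in> carrier R" using x unfolding jacobson_def by auto
  define N where "N = {y \<in> carrier R. y \<otimes> r \<in> M}"
  have Nli: "left_ideal R N"
    unfolding left_ideal_def
  proof
    show "additive_subgroup N R"
    proof (rule addsgI[OF R])
      show "N \<subseteq> carrier R" unfolding N_def by auto
      show "\<zero> \<in> N" unfolding N_def using r by auto
      show "\<And>a. a \<in> N \<Longrightarrow> \<ominus> a \<in> N"
        unfolding N_def using r by (auto simp: l_minus)
      show "\<And>a b. a \<in> N \<Longrightarrow> b \<in> N \<Longrightarrow> a \<oplus> b \<in> N"
        unfolding N_def using r by (auto simp: l_distr)
    qed
    show "\<forall>s\<in>carrier R. \<forall>y\<in>N. s \<otimes> y \<in> N"
      unfolding N_def using r Ml by (auto simp: m_assoc)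
  qed
  show ?thesis
  proof (cases "N = carrier R")
    case True
    then show ?thesis using xc unfolding N_def by auto
  next
    case False
    have "maximal_left_ideal R N"
      unfolding maximal_left_ideal_def
    proof (intro conjI Nli False allI impI)
      fix K assume K: "left_ideal R K \<and> N \<subseteq> K \<and> K \<noteq> carrier R"
      then have Ks: "additive_subgroup K R" and Kl: "\<And>s y. s \<in> carrier R \<Longrightarrow> y \<in> K \<Longrightarrow> s \<otimes> y \<in> K"
        unfolding left_ideal_def by auto
      interpret K: additive_subgroup K R by fact
      show "K = N"
      proof (rule ccontr)
        assume "K \<noteq> N"
        with K obtain k where k: "k \<in> K" "k \<notin> N" by auto
        have kc: "k \<in> carrier R" using k K.a_subset by auto
        have krM: "k \<otimes> r \<notin> M" using k kc unfolding N_def by auto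
        define L where "L = {m \<oplus> s \<otimes> (k \<otimes> r) | m s. m \<in> M \<and> s \<in> carrier R}"
        have Lli: "left_ideal R L"
          unfolding left_ideal_def
        proof
          show "additive_subgroup L R"
          proof (rule addsgI[OF R])
            show "L \<subseteq> carrier R" unfolding L_def using kc r M.a_subset by auto
            show "\<zero> \<in> L" unfolding L_def using M.zero_closed kc r
              by (auto intro!: exI[of _ "\<zero>"])
            show "\<And>a. a \<in> L \<Longrightarrow> \<ominus> a \<in> L"
            proof -
              fix a assume "a \<in> L"
              then obtain m s where ms: "a = m \<oplus> s \<otimes> (k \<otimes> r)" "m \<in> M" "s \<in> carrier R"
                unfolding L_def by auto
              have mc: "m \<in> carrier R" using ms M.a_subset by auto
              have "\<ominus> a = (\<ominus> m) \<oplus> (\<ominus> s) \<otimes> (k \<otimes> r)"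
                using ms mc kc r by (simp add: minus_add l_minus)
              then show "\<ominus> a \<in> L" unfolding L_def using ms by auto
            qed
            show "\<And>a b. a \<in> L \<Longrightarrow> b \<in> L \<Longrightarrow> a \<oplus> b \<in> L"
            proof -
              fix a b assume "a \<in> L" "b \<in> L"
              then obtain m s m' s' where ms: "a = m \<oplus> s \<otimes> (k \<otimes> r)" "m \<in> M" "s \<in> carrier R"
                "b = m' \<oplus> s' \<otimes> (k \<otimes> r)" "m' \<in> M" "s' \<in> carrier R"
                unfolding L_def by auto
              have mc: "m \<in> carrier R" "m' \<in> carrier R" using ms M.a_subset by auto
              have "a \<oplus> b = (m \<oplus> m') \<oplus> (s \<oplus> s') \<otimes> (k \<otimes> r)"
                using ms mc kc r by (simp add: l_distr a_ac)
              then show "a \<oplus> b \<in> L" unfolding L_def using ms by auto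
            qed
          qed
          show "\<forall>t\<in>carrier R. \<forall>y\<in>L. t \<otimes> y \<in> L"
          proof (intro ballI)
            fix t y assume t: "t \<in> carrier R" and "y \<in> L"
            then obtain m s where ms: "y = m \<oplus> s \<otimes> (k \<otimes> r)" "m \<in> M" "s \<in> carrier R"
              unfolding L_def by auto
            have mc: "m \<in> carrier R" using ms M.a_subset by auto
            have "t \<otimes> y = t \<otimes> m \<oplus> (t \<otimes> s) \<otimes> (k \<otimes> r)"
              using ms mc kc r t by (simp add: r_distr m_assoc)
            then show "t \<otimes> y \<in> L" unfolding L_def using ms t Ml by auto
          qed
        qed
        have MsubL: "M \<subseteq> L"
        proof
          fix m assume m: "m \<in> M"
          have "m = m \<oplus> \<zero> \<otimes> (k \<otimes> r)" using m M.a_subset kc r by auto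
          then show "m \<in> L" unfolding L_def using m by blast
        qed
        have krL: "k \<otimes> r \<in> L"
        proof -
          have "k \<otimes> r = \<zero> \<oplus> \<one> \<otimes> (k \<otimes> r)" using kc r by simp
          then show ?thesis unfolding L_def using M.zero_closed by blast
        qed
        have "L = carrier R"
        proof (rule ccontr)
          assume "L \<noteq> carrier R"
          then have "L = M" using M Lli MsubL unfolding maximal_left_ideal_def by blast
          then show False using krL krM by auto
        qed
        then have Lall: "\<And>w. w \<in> carrier R \<Longrightarrow> w \<in> L" by auto
        have "carrier R \<subseteq> K"
        proof
          fix z assume z: "z \<in> carrier R"
          have "z \<otimes> r \<in> L" using Lall z r by auto
          then obtain m s where ms: "z \<otimes> r = m \<oplus> s \<otimes> (k \<otimes> r)" "m \<in> M" "s \<in> carrier R"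
            unfolding L_def by auto
          have mc: "m \<in> carrier R" using ms M.a_subset by auto
          have "(z \<ominus> s \<otimes> k) \<otimes> r = z \<otimes> r \<ominus> s \<otimes> (k \<otimes> r)"
            using z ms(3) kc r by algebra
          also have "\<dots> = m" unfolding ms(1) using mc ms(3) kc r by algebra
          finally have "(z \<ominus> s \<otimes> k) \<otimes> r \<in> M" using ms by auto
          then have "z \<ominus> s \<otimes> k \<in> N" unfolding N_def using z ms kc by auto
          then have a: "z \<ominus> s \<otimes> k \<in> K" using K by auto
          have b: "s \<otimes> k \<in> K" using Kl[OF _ k(1), of "s"] ms by auto
          have "z = (z \<ominus> s \<otimes> k) \<oplus> s \<otimes> k" using z ms kc by algebra
          then show "z \<in> K" using K.a_closed[OF a b] by simp
        qed
        then show False using K K.a_subset by auto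
      qed
    qed
    then have "x \<in> N" using x unfolding jacobson_def by auto
    then show ?thesis unfolding N_def by auto
  qed
qed


lemma jac_ideal:
  fixes R (structure)
  assumes R: "ring R"
  shows "ideal (jacobson R) R"
proof -
  interpret ring R by fact
  have jm: "\<And>a. a \<in> jacobson R \<longleftrightarrow> a \<in> carrier R \<and> (\<forall>M. maximal_left_ideal R M \<longrightarrow> a \<in> M)"
    unfolding jacobson_def by auto
  have as: "additive_subgroup (jacobson R) R"
  proof (rule addsgI[OF R])
    show "jacobson R \<subseteq> carrier R" unfolding jacobson_def by auto
    show "\<zero> \<in> jacobson R" unfolding jm
    proof (intro conjI allI impI)
      fix M assume "maximal_left_ideal R M"
      then show "\<zero> \<in> M" by (rule additive_subgroup.zero_closed[OF max_li(1)])
    qed simp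
    show "\<ominus> a \<in> jacobson R" if a: "a \<in> jacobson R" for a
      unfolding jm
    proof (intro conjI allI impI)
      show "\<ominus> a \<in> carrier R" using a jm by simp
      fix M assume M: "maximal_left_ideal R M"
      then have "a \<in> M" using a jm by simp
      then show "\<ominus> a \<in> M" by (rule additive_subgroup.a_inv_closed[OF max_li(1)[OF M]])
    qed
    show "a \<oplus> b \<in> jacobson R" if a: "a \<in> jacobson R" and b: "b \<in> jacobson R" for a b
      unfolding jm
    proof (intro conjI allI impI)
      show "a \<oplus> b \<in> carrier R" using a b jm by simp
      fix M assume M: "maximal_left_ideal R M"
      then have "a \<in> M" "b \<in> M" using a b jm by simp_all
      then show "a \<oplus> b \<in> M" by (rule additive_subgroup.a_closed[OF max_li(1)[OF M]])
    qed
  qed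
  show ?thesis
  proof (rule idealI[OF R])
    show "subgroup (jacobson R) (add_monoid R)" by (rule additive_subgroup.a_subgroup[OF as])
    show "x \<otimes> a \<in> jacobson R" if a: "a \<in> jacobson R" and x: "x \<in> carrier R" for a x
      unfolding jm
    proof (intro conjI allI impI)
      show "x \<otimes> a \<in> carrier R" using a x jm by simp
      fix M assume M: "maximal_left_ideal R M"
      then have "a \<in> M" using a jm by simp
      then show "x \<otimes> a \<in> M" by (rule max_li(2)[OF M x])
    qed
    show "a \<otimes> x \<in> jacobson R" if a: "a \<in> jacobson R" and x: "x \<in> carrier R" for a x
      unfolding jm
    proof (intro conjI allI impI)
      show "a \<otimes> x \<in> carrier R" using a x jm by simp
      fix M assume M: "maximal_left_ideal R M"
      show "a \<otimes> x \<in> M" by (rule colon_in[OF R M x a])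
    qed
  qed
qed

lemma main_aux:
  fixes R (structure)
  assumes "ring R"
  shows "uniquely_weakly_J_clean R \<longleftrightarrow>
    (semi_boolean (R Quot (jacobson R)) \<and> idem_lift_uniquely_weakly R (jacobson R))"
proof -
  interpret ring R by fact
  define J where "J = jacobson R"
  have I: "ideal J R" unfolding J_def by (rule jac_ideal[OF assms])
  interpret I: ideal J R by (rule I)
  interpret H: ring_hom_ring R "R Quot J" "(+>) J" by (rule I.rcos_ring_hom_ring)
  have surj: "\<And>Y. Y \<in> carrier (R Quot J) \<Longrightarrow> \<exists>x\<in>carrier R. Y = J +> x"
    unfolding FactRing_def A_RCOSETS_def' by auto
  have eqv: "\<And>a b. a \<in> carrier R \<Longrightarrow> b \<in> carrier R \<Longrightarrow> (J +> a = J +> b) \<longleftrightarrow> a \<ominus> b \<in> J"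
  proof -
    fix a b assume a: "a \<in> carrier R" and b: "b \<in> carrier R"
    show "(J +> a = J +> b) \<longleftrightarrow> a \<ominus> b \<in> J"
    proof
      assume "J +> a = J +> b"
      then have "a \<in> J +> b" using I.a_rcos_self[OF a] by simp
      then show "a \<ominus> b \<in> J" using I.a_rcos_module_minus[OF assms b a] by simp
    next
      assume "a \<ominus> b \<in> J"
      then have "a \<in> J +> b" using I.a_rcos_module_minus[OF assms b a] by simp
      then show "J +> a = J +> b" using I.a_repr_independence'[OF _ b] by simp
    qed
  qed
  have Jneg: "\<And>a. a \<in> carrier R \<Longrightarrow> \<ominus> a \<in> J \<longleftrightarrow> a \<in> J"
    proof -
    fix a assume a: "a \<in> carrier R"
    show "\<ominus> a \<in> J \<longleftrightarrow> a \<in> J"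
      using I.a_inv_closed[of a] I.a_inv_closed[of "\<ominus> a"] minus_minus[OF a] by auto
  qed
  have ic: "\<And>e. e \<in> Idem_set R \<Longrightarrow> e \<in> carrier R \<and> e \<otimes> e = e" unfolding Idem_set_def by auto
  show ?thesis
    unfolding J_def[symmetric]
  proof
    assume U: "uniquely_weakly_J_clean R"
    have U': "\<And>x. x \<in> carrier R \<Longrightarrow> \<exists>!e. e \<in> Idem_set R \<and> (x \<ominus> e \<in> J \<or> x \<oplus> e \<in> J)"
      using U unfolding uniquely_weakly_J_clean_def J_def by auto
    have "semi_boolean (R Quot J)"
      unfolding semi_boolean_def
    proof
      fix Y assume "Y \<in> carrier (R Quot J)"
      then obtain x where x: "x \<in> carrier R" "Y = J +> x" using surj by blast
      obtain e where e: "e \<in> Idem_set R" "x \<ominus> e \<in> J \<or> x \<oplus> e \<in> J" using U'[OF x(1)] by blast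
      have ec: "e \<in> carrier R" "e \<otimes> e = e" using ic[OF e(1)] by auto
      have sq: "Y \<otimes>\<^bsub>R Quot J\<^esub> Y = J +> (x \<otimes> x)" using H.hom_mult[OF x(1) x(1)] x(2) by simp
      have ng: "\<ominus>\<^bsub>R Quot J\<^esub> Y = J +> (\<ominus> x)" using H.hom_a_inv[OF x(1)] x(2) by simp
      from e(2) show "Y \<otimes>\<^bsub>R Quot J\<^esub> Y = Y \<or> Y \<otimes>\<^bsub>R Quot J\<^esub> Y = \<ominus>\<^bsub>R Quot J\<^esub> Y"
      proof
        assume "x \<ominus> e \<in> J"
        then have xe: "J +> x = J +> e" using eqv x ec by simp
        have "J +> (x \<otimes> x) = (J +> x) \<otimes>\<^bsub>R Quot J\<^esub> (J +> x)" by (rule H.hom_mult[OF x(1) x(1)])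
        also have "\<dots> = (J +> e) \<otimes>\<^bsub>R Quot J\<^esub> (J +> e)" by (simp only: xe)
        also have "\<dots> = J +> (e \<otimes> e)" by (rule H.hom_mult[OF ec(1) ec(1), symmetric])
        also have "\<dots> = J +> e" by (simp only: ec(2))
        finally have xx: "J +> (x \<otimes> x) = J +> e" .
        show ?thesis using trans[OF trans[OF trans[OF sq xx] xe[symmetric]] x(2)[symmetric]] by (rule disjI1)
      next
        assume xe0: "x \<oplus> e \<in> J"
        have "x \<ominus> \<ominus> e = x \<oplus> e" using x ec by (simp add: minus_eq)
        then have xe: "J +> x = J +> (\<ominus> e)"
          using eqv[OF x(1) a_inv_closed[OF ec(1)], THEN iffD2] xe0 by simp
        have "\<ominus> x \<ominus> e = \<ominus> (x \<oplus> e)" using x ec by (simp add: minus_eq minus_add)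
        then have xe2: "J +> (\<ominus> x) = J +> e"
          using eqv[OF a_inv_closed[OF x(1)] ec(1), THEN iffD2] xe0 Jneg[OF add.m_closed[OF x(1) ec(1)]] by simp
        have ee: "\<ominus> e \<otimes> \<ominus> e = e" using ec by (simp add: l_minus r_minus)
        have "J +> (x \<otimes> x) = (J +> x) \<otimes>\<^bsub>R Quot J\<^esub> (J +> x)" by (rule H.hom_mult[OF x(1) x(1)])
        also have "\<dots> = (J +> (\<ominus> e)) \<otimes>\<^bsub>R Quot J\<^esub> (J +> (\<ominus> e))" by (simp only: xe)
        also have "\<dots> = J +> (\<ominus> e \<otimes> \<ominus> e)"
          by (rule H.hom_mult[OF a_inv_closed[OF ec(1)] a_inv_closed[OF ec(1)], symmetric])
        also have "\<dots> = J +> e" by (simp only: ee)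
        finally have xx: "J +> (x \<otimes> x) = J +> e" .
        show ?thesis using trans[OF trans[OF trans[OF sq xx] xe2[symmetric]] ng[symmetric]] by (rule disjI2)
      qed
    qed
    moreover have "idem_lift_uniquely_weakly R J"
      unfolding idem_lift_uniquely_weakly_def using U' by blast
    ultimately show "semi_boolean (R Quot J) \<and> idem_lift_uniquely_weakly R J" by blast
  next
    assume A: "semi_boolean (R Quot J) \<and> idem_lift_uniquely_weakly R J"
    have L: "\<And>x. x \<in> carrier R \<Longrightarrow> x \<otimes> x \<ominus> x \<in> J \<Longrightarrow> \<exists>!e. e \<in> Idem_set R \<and> (x \<ominus> e \<in> J \<or> x \<oplus> e \<in> J)"
      using A unfolding idem_lift_uniquely_weakly_def by blast
    show "uniquely_weakly_J_clean R"
      unfolding uniquely_weakly_J_clean_def J_def[symmetric]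
    proof
      fix x assume x: "x \<in> carrier R"
      have Xc: "J +> x \<in> carrier (R Quot J)" using x H.hom_closed by blast
      have "(J +> x) \<otimes>\<^bsub>R Quot J\<^esub> (J +> x) = J +> x \<or>
            (J +> x) \<otimes>\<^bsub>R Quot J\<^esub> (J +> x) = \<ominus>\<^bsub>R Quot J\<^esub> (J +> x)"
        using A Xc unfolding semi_boolean_def by blast
      then have "J +> (x \<otimes> x) = J +> x \<or> J +> (x \<otimes> x) = J +> (\<ominus> x)"
        by (simp only: H.hom_mult[OF x x] H.hom_a_inv[OF x])
      then show "\<exists>!e. e \<in> Idem_set R \<and> (x \<ominus> e \<in> J \<or> x \<oplus> e \<in> J)"
      proof
        assume "J +> (x \<otimes> x) = J +> x"
        then have "x \<otimes> x \<ominus> x \<in> J" using eqv[OF m_closed[OF x x] x] by blast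
        then show ?thesis using L x by blast
      next
        assume "J +> (x \<otimes> x) = J +> (\<ominus> x)"
        then have h: "x \<otimes> x \<ominus> \<ominus> x \<in> J" using eqv[OF m_closed[OF x x] a_inv_closed[OF x]] by blast
        have "\<ominus> x \<otimes> \<ominus> x \<ominus> \<ominus> x = x \<otimes> x \<ominus> \<ominus> x" using x by (simp add: l_minus r_minus)
        then have E1: "\<exists>!e. e \<in> Idem_set R \<and> (\<ominus> x \<ominus> e \<in> J \<or> \<ominus> x \<oplus> e \<in> J)"
          using L[of "\<ominus> x"] x h by simp
        have EQ: "\<And>e. e \<in> Idem_set R \<Longrightarrow> (\<ominus> x \<ominus> e \<in> J \<or> \<ominus> x \<oplus> e \<in> J) \<longleftrightarrow> (x \<ominus> e \<in> J \<or> x \<oplus> e \<in> J)"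
        proof -
          fix e assume "e \<in> Idem_set R"
          then have ec: "e \<in> carrier R" using ic by auto
          have 1: "\<ominus> x \<ominus> e = \<ominus> (x \<oplus> e)" using x ec by (simp add: minus_eq minus_add)
          have 2: "\<ominus> x \<oplus> e = \<ominus> (x \<ominus> e)" using x ec by (simp add: minus_eq minus_add)
          show "(\<ominus> x \<ominus> e \<in> J \<or> \<ominus> x \<oplus> e \<in> J) \<longleftrightarrow> (x \<ominus> e \<in> J \<or> x \<oplus> e \<in> J)"
            using 1 2 Jneg x ec by auto
        qed
        have F: "\<And>e. (e \<in> Idem_set R \<and> (\<ominus> x \<ominus> e \<in> J \<or> \<ominus> x \<oplus> e \<in> J)) =
            (e \<in> Idem_set R \<and> (x \<ominus> e \<in> J \<or> x \<oplus> e \<in> J))"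
          using EQ by blast
        show ?thesis using E1 by (simp only: F)
      qed
    qed
  qed
qed

theorem mainTheorem8:
  fixes R :: "('a, 'b) ring_scheme"
  assumes "ring R"
  shows "uniquely_weakly_J_clean R \<longleftrightarrow>
    (semi_boolean (R Quot (jacobson R)) \<and> idem_lift_uniquely_weakly R (jacobson R))"
  by (rule main_aux[OF assms])

end
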